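(* Define $f:\mathbb{N}\to\mathbb{N}$ by $f(n)=n$ if $n$ is even and $f(n)=\frac{n+1}{2}$ if $n$ is odd, and let $f^{\downarrow}(n)$ be the first even value in the sequence $n, f(n), f(f(n)), \dots$ (obtained by applying $f$ repeatedly until the result is even). Then every fence of even cardinality is locally unsymmetric, and every (upper or lower) fence of odd cardinality $n\ge3$ is retractable to the $f^{\downarrow}(n)$-fence.
   Context: An $n$-fence is a poset of $n$ elements $a_1,\dots,a_n$ whose order is generated by alternating relations $a_1<a_2>a_3<\cdots a_n$ (lower fence) or $a_1>a_2<a_3>\cdots a_n$ (upper fence); for even $n$ these coincide up to isomorphism. Notation: $\ell(X)$ is the cardinality of a longest chain of a poset $X$. A subset $A$ of a poset $X$ is maximally ordered in $X$ if $|\{(a,b)\in A\times A:a<b\}|$ is maximal among subsets of $X$ of cardinality $|A|$. For $\sigma\in\mathrm{Aut}(P)$, $\Sigma(\sigma)=\{a:\sigma(a)\ne a\}$. For finite $Q$ and $r\ge2$: $\sigma\in\mathrm{Aut}(P)$ is a $(Q,r)$-generator if there exist subsets $S_0,\dots,S_{r-1}\subset\Sigma(\sigma)$, each isomorphic to $Q$, which are smallest maximally ordered subsets of $\Sigma(\sigma)$ with $\sigma(S_i)=S_{(i+1)\bmod r}$, $\ell(S_i)=\ell(\Sigma(\sigma))$, $\bigcup_iS_i=\Sigma(\sigma)$; distinct $S_i,S_j$ are $(Q,r)$-symmetric subsets. Elements $a,b$ are $(Q,r,0)$-symmetric if $a=b$; $(Q,r,1)$-symmetric if there are $(Q,r)$-symmetric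 subsets $A,B$ with generator $\sigma$, $a\in A$, $b=\sigma^q(a)\in B$, $1\le q<r$; for $n\ge2$, $(Q,r,n)$-symmetric if not $(Q,r,j)$-symmetric for $j<n$ but there exist $c$, $j<n$ with $a$ $(Q,r,j)$-symmetric to $c$ and $c$ $(Q,r,n-j)$-symmetric to $b$; $(Q,r)$-symmetric if $(Q,r,n)$-symmetric for some $n\ge0$ (an equivalence relation). $P\oslash_rQ$ is the quotient poset of equivalence classes with $E\le F$ iff some $e\in E$, $f\in F$ satisfy $e\le f$. $P$ is locally symmetric if $P\oslash_rQ\not\cong P$ for some finite $Q$ and $r\ge2$, and locally unsymmetric otherwise. $P$ is retractable to $\tilde P$ if there is a sequence of pairs $(Q_1,r_1),(Q_2,r_2),\dots$ with $\tilde P\cong(\cdots((P\oslash_{r_1}Q_1)\oslash_{r_2}Q_2)\cdots)$ and $\tilde P\not\cong P$. *)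

theory Defs
  imports Main
begin

definition is_poset :: "'a set \<Rightarrow> ('a \<Rightarrow> 'a \<Rightarrow> bool) \<Rightarrow> bool" where
  "is_poset X le \<longleftrightarrow> (\<forall>x\<in>X. le x x) \<and> (\<forall>x\<in>X. \<forall>y\<in>X. le x y \<and> le y x \<longrightarrow> x = y)
     \<and> (\<forall>x\<in>X. \<forall>y\<in>X. \<forall>z\<in>X. le x y \<and> le y z \<longrightarrow> le x z)"

definition poset_iso :: "'a set \<Rightarrow> ('a \<Rightarrow> 'a \<Rightarrow> bool) \<Rightarrow> 'b set \<Rightarrow> ('b \<Rightarrow> 'b \<Rightarrow> bool) \<Rightarrow> bool" where
  "poset_iso X le Y le' \<longleftrightarrow> (\<exists>h. bij_betw h X Y \<and> (\<forall>a\<in>X. \<forall>b\<in>X. le a b \<longleftrightarrow> le' (h a) (h b)))"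

definition is_aut :: "'a set \<Rightarrow> ('a \<Rightarrow> 'a \<Rightarrow> bool) \<Rightarrow> ('a \<Rightarrow> 'a) \<Rightarrow> bool" where
  "is_aut X le \<sigma> \<longleftrightarrow> bij_betw \<sigma> X X \<and> (\<forall>a\<in>X. \<forall>b\<in>X. le a b \<longleftrightarrow> le (\<sigma> a) (\<sigma> b))"

definition moved :: "'a set \<Rightarrow> ('a \<Rightarrow> 'a) \<Rightarrow> 'a set" where
  "moved X \<sigma> = {a \<in> X. \<sigma> a \<noteq> a}"

definition is_chain :: "('a \<Rightarrow> 'a \<Rightarrow> bool) \<Rightarrow> 'a set \<Rightarrow> bool" where
  "is_chain le C \<longleftrightarrow> (\<forall>a\<in>C. \<forall>b\<in>C. le a b \<or> le b a)"

definition longest_chain :: "('a \<Rightarrow> 'a \<Rightarrow> bool) \<Rightarrow> 'a set \<Rightarrow> nat" where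
  "longest_chain le Y = Max {card C | C. C \<subseteq> Y \<and> is_chain le C}"

definition ord_pairs :: "('a \<Rightarrow> 'a \<Rightarrow> bool) \<Rightarrow> 'a set \<Rightarrow> nat" where
  "ord_pairs le A = card {(a, b). a \<in> A \<and> b \<in> A \<and> le a b \<and> a \<noteq> b}"

definition max_ordered :: "('a \<Rightarrow> 'a \<Rightarrow> bool) \<Rightarrow> 'a set \<Rightarrow> 'a set \<Rightarrow> bool" where
  "max_ordered le Z A \<longleftrightarrow> A \<subseteq> Z \<and>
     (\<forall>B. B \<subseteq> Z \<and> card B = card A \<longrightarrow> ord_pairs le B \<le> ord_pairs le A)"

definition gen_family :: "'a set \<Rightarrow> ('a \<Rightarrow> 'a \<Rightarrow> bool) \<Rightarrow> ('a \<Rightarrow> 'a) \<Rightarrow> nat \<Rightarrow> (nat \<Rightarrow> 'a set) \<Rightarrow> nat \<Rightarrow> bool" where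
  "gen_family X le \<sigma> r S k \<longleftrightarrow>
     (\<forall>i<r. max_ordered le (moved X \<sigma>) (S i) \<and> card (S i) = k
            \<and> \<sigma> ` (S i) = S ((i + 1) mod r)
            \<and> longest_chain le (S i) = longest_chain le (moved X \<sigma>))
     \<and> (\<Union>i<r. S i) = moved X \<sigma>"

definition is_generator :: "'a set \<Rightarrow> ('a \<Rightarrow> 'a \<Rightarrow> bool) \<Rightarrow> 'b set \<Rightarrow> ('b \<Rightarrow> 'b \<Rightarrow> bool)
    \<Rightarrow> nat \<Rightarrow> ('a \<Rightarrow> 'a) \<Rightarrow> (nat \<Rightarrow> 'a set) \<Rightarrow> bool" where
  "is_generator X le Q leQ r \<sigma> S \<longleftrightarrow>
     is_aut X le \<sigma> \<and> 2 \<le> r \<and> gen_family X le \<sigma> r S (card Q)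
     \<and> (\<forall>i<r. poset_iso (S i) le Q leQ)
     \<and> (\<forall>k T. gen_family X le \<sigma> r T k \<longrightarrow> card Q \<le> k)"

definition sym1 :: "'a set \<Rightarrow> ('a \<Rightarrow> 'a \<Rightarrow> bool) \<Rightarrow> 'b set \<Rightarrow> ('b \<Rightarrow> 'b \<Rightarrow> bool) \<Rightarrow> nat
    \<Rightarrow> 'a \<Rightarrow> 'a \<Rightarrow> bool" where
  "sym1 X le Q leQ r a b \<longleftrightarrow>
     (\<exists>\<sigma> S i j q. is_generator X le Q leQ r \<sigma> S \<and> i < r \<and> j < r \<and> S i \<noteq> S j
        \<and> a \<in> S i \<and> 1 \<le> q \<and> q < r \<and> b = (\<sigma> ^^ q) a \<and> b \<in> S j)"

text \<open>(Q,r)-symmetry: (Q,r,n)-symmetric for some n, i.e. reachable by a chain of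
  (Q,r,1)-steps (n = 0 is equality).\<close>
definition qsym :: "'a set \<Rightarrow> ('a \<Rightarrow> 'a \<Rightarrow> bool) \<Rightarrow> 'b set \<Rightarrow> ('b \<Rightarrow> 'b \<Rightarrow> bool) \<Rightarrow> nat
    \<Rightarrow> 'a \<Rightarrow> 'a \<Rightarrow> bool" where
  "qsym X le Q leQ r = (sym1 X le Q leQ r)\<^sup>*\<^sup>*"

definition quot_carrier :: "'a set \<Rightarrow> ('a \<Rightarrow> 'a \<Rightarrow> bool) \<Rightarrow> 'b set \<Rightarrow> ('b \<Rightarrow> 'b \<Rightarrow> bool) \<Rightarrow> nat
    \<Rightarrow> 'a set set" where
  "quot_carrier X le Q leQ r = (\<lambda>a. {b \<in> X. qsym X le Q leQ r a b}) ` X"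

definition quot_le :: "('a \<Rightarrow> 'a \<Rightarrow> bool) \<Rightarrow> 'a set \<Rightarrow> 'a set \<Rightarrow> bool" where
  "quot_le le E F \<longleftrightarrow> (\<exists>e\<in>E. \<exists>f\<in>F. le e f)"

text \<open>Local symmetry. Finite posets Q are taken up to isomorphism, represented on nat.\<close>
definition locally_symmetric :: "'a set \<Rightarrow> ('a \<Rightarrow> 'a \<Rightarrow> bool) \<Rightarrow> bool" where
  "locally_symmetric X le \<longleftrightarrow>
     (\<exists>(Q :: nat set) leQ r. finite Q \<and> is_poset Q leQ \<and> 2 \<le> r \<and>
        \<not> poset_iso (quot_carrier X le Q leQ r) (quot_le le) X le)"

definition retract_step :: "nat set \<times> (nat \<Rightarrow> nat \<Rightarrow> bool) \<Rightarrow> nat set \<times> (nat \<Rightarrow> nat \<Rightarrow> bool) \<Rightarrow> bool" where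
  "retract_step P P' \<longleftrightarrow>
     (\<exists>(Q :: nat set) leQ r. finite Q \<and> is_poset Q leQ \<and> 2 \<le> r \<and>
        poset_iso (quot_carrier (fst P) (snd P) Q leQ r) (quot_le (snd P)) (fst P') (snd P'))"

definition retractable :: "nat set \<times> (nat \<Rightarrow> nat \<Rightarrow> bool) \<Rightarrow> nat set \<times> (nat \<Rightarrow> nat \<Rightarrow> bool) \<Rightarrow> bool" where
  "retractable P T \<longleftrightarrow> retract_step\<^sup>+\<^sup>+ P T \<and> \<not> poset_iso (fst P) (snd P) (fst T) (snd T)"

text \<open>n-fence on {1..n}: lower fence (lower = True) a_1 < a_2 > a_3 < ..., upper fence
  (lower = False) a_1 > a_2 < a_3 > ...; order generated by the covering relations.\<close>
definition fence_cover :: "bool \<Rightarrow> nat \<Rightarrow> nat \<Rightarrow> nat \<Rightarrow> bool" where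
  "fence_cover lower n i j \<longleftrightarrow> i \<in> {1..n} \<and> j \<in> {1..n} \<and> (j = i + 1 \<or> i = j + 1)
     \<and> (odd i \<longleftrightarrow> lower)"

definition fence_le :: "bool \<Rightarrow> nat \<Rightarrow> nat \<Rightarrow> nat \<Rightarrow> bool" where
  "fence_le lower n = (fence_cover lower n)\<^sup>*\<^sup>*"

definition fence :: "bool \<Rightarrow> nat \<Rightarrow> nat set \<times> (nat \<Rightarrow> nat \<Rightarrow> bool)" where
  "fence lower n = ({1..n}, fence_le lower n)"

definition fstep :: "nat \<Rightarrow> nat" where
  "fstep n = (if even n then n else (n + 1) div 2)"

definition fdown :: "nat \<Rightarrow> nat" where
  "fdown n = (fstep ^^ (LEAST k. even ((fstep ^^ k) n))) n"

end

theory Submission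
  imports Defs
begin


lemma fle: "fence_le lower n a b \<longleftrightarrow> a = b \<or> (a \<in> {1..n} \<and> b \<in> {1..n} \<and> (b = a+1 \<or> a = b+1) \<and> (odd a \<longleftrightarrow> lower))"
proof
  assume "fence_le lower n a b"
  then show "a = b \<or> (a \<in> {1..n} \<and> b \<in> {1..n} \<and> (b = a+1 \<or> a = b+1) \<and> (odd a \<longleftrightarrow> lower))"
    unfolding fence_le_def
  proof (induction rule: rtranclp_induct)
    case base thus ?case by simp
  next
    case (step y z) thus ?case by (auto simp: fence_cover_def)
  qed
next
  assume "a = b \<or> (a \<in> {1..n} \<and> b \<in> {1..n} \<and> (b = a+1 \<or> a = b+1) \<and> (odd a \<longleftrightarrow> lower))"
  thus "fence_le lower n a b" unfolding fence_le_def
    by (elim disjE) (auto simp: fence_cover_def intro: r_into_rtranclp)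
qed

definition adj :: "nat \<Rightarrow> nat \<Rightarrow> bool" where "adj a b \<longleftrightarrow> (b = a+1 \<or> a = b+1)"

lemma adj_le: "a \<in> {1..n} \<Longrightarrow> b \<in> {1..n} \<Longrightarrow> adj a b \<longleftrightarrow> (a \<noteq> b \<and> (fence_le lower n a b \<or> fence_le lower n b a))"
  unfolding adj_def fle by auto

lemma aut_adj: assumes "is_aut {1..n} (fence_le lower n) \<sigma>" "a \<in> {1..n}" "b \<in> {1..n}"
  shows "adj (\<sigma> a) (\<sigma> b) \<longleftrightarrow> adj a b"
proof -
  have b: "bij_betw \<sigma> {1..n} {1..n}" and o: "\<forall>a\<in>{1..n}. \<forall>b\<in>{1..n}. fence_le lower n a b \<longleftrightarrow> fence_le lower n (\<sigma> a) (\<sigma> b)"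
    using assms(1) unfolding is_aut_def by auto
  have sa: "\<sigma> a \<in> {1..n}" "\<sigma> b \<in> {1..n}" using bij_betwE[OF b] assms by blast+
  have "\<sigma> a = \<sigma> b \<longleftrightarrow> a = b" using inj_on_eq_iff[OF bij_betw_imp_inj_on[OF b]] assms(2,3) by blast
  thus ?thesis using adj_le[OF sa, of lower] adj_le[OF assms(2,3), of lower] o assms(2,3) by blast
qed

lemma path_fix:
  assumes b: "bij_betw \<sigma> {1..n} {1..n}"
    and ad: "\<forall>a\<in>{1..n}. \<forall>b\<in>{1..n}. adj (\<sigma> a) (\<sigma> b) \<longleftrightarrow> adj a b"
    and s1: "\<sigma> 1 = 1"
  shows "\<forall>i\<in>{1..n}. \<sigma> i = i"
proof -
  have inj: "inj_on \<sigma> {1..n}" using bij_betw_imp_inj_on[OF b] .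
  have "\<forall>j. 1 \<le> j \<and> j \<le> i \<and> i \<le> n \<longrightarrow> \<sigma> j = j" for i
  proof (induction i)
    case 0 show ?case by simp
  next
    case (Suc i)
    show ?case
    proof (intro allI impI)
      fix j assume j: "1 \<le> j \<and> j \<le> Suc i \<and> Suc i \<le> n"
      show "\<sigma> j = j"
      proof (cases "j \<le> i")
        case True thus ?thesis using Suc.IH[rule_format, of j] j by simp
      next
        case False then have jj: "j = Suc i" using j by simp
        show ?thesis
        proof (cases "i = 0")
          case True thus ?thesis using jj s1 by simp
        next
          case False
          have si: "\<sigma> i = i" using Suc.IH[rule_format, of i] False j by simp
          have ii: "i \<in> {1..n}" "Suc i \<in> {1..n}" using False j by auto
          have "adj i (Suc i)" by (simp add: adj_def)
          hence "adj (\<sigma> i) (\<sigma> (Suc i))" using ad ii by blast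
          hence a2: "\<sigma> (Suc i) = Suc i \<or> \<sigma> (Suc i) + 1 = i" using si by (auto simp: adj_def)
          have inr: "\<sigma> (Suc i) \<in> {1..n}" using bij_betwE[OF b] j by auto
          show ?thesis
          proof (cases "\<sigma> (Suc i) = Suc i")
            case True thus ?thesis using jj by simp
          next
            case F2: False
            hence e: "\<sigma> (Suc i) = i - 1" "i \<ge> 2" using a2 inr by auto
            have "\<sigma> (i - 1) = i - 1" using Suc.IH[rule_format, of "i - 1"] e j by simp
            hence "\<sigma> (Suc i) = \<sigma> (i - 1)" using e by simp
            moreover have "i - 1 \<in> {1..n}" using e j by auto
            ultimately have "Suc i = i - 1" using inj_onD[OF inj] ii(2) by blast
            thus ?thesis using e by simp
          qed
        qed
      qed
    qed
  qed
  thus ?thesis by (meson atLeastAtMost_iff order_refl)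
qed

lemma path_end:
  assumes b: "bij_betw \<sigma> {1..n} {1..n}"
    and ad: "\<forall>a\<in>{1..n}. \<forall>b\<in>{1..n}. adj (\<sigma> a) (\<sigma> b) \<longleftrightarrow> adj a b"
    and n: "n \<ge> 1"
  shows "\<sigma> 1 = 1 \<or> \<sigma> 1 = n"
proof (rule ccontr)
  assume c: "\<not> ?thesis"
  obtain c0 where c0: "\<sigma> 1 = c0" by blast
  have inr: "c0 \<in> {1..n}" using bij_betwE[OF b] n c0 by auto
  have im: "\<sigma> ` {1..n} = {1..n}" using bij_betw_imp_surj_on[OF b] .
  have cc: "c0 \<noteq> 1" "c0 \<noteq> n" using c c0 by auto
  have "c0 - 1 \<in> {1..n}" "c0 + 1 \<in> {1..n}" using cc inr by auto
  then obtain u v where u: "u \<in> {1..n}" "\<sigma> u = c0 - 1" and v: "v \<in> {1..n}" "\<sigma> v = c0 + 1"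
    using im by (metis imageE)
  have "adj c0 (c0 - 1)" "adj c0 (c0 + 1)" using cc inr by (auto simp: adj_def)
  hence "adj (\<sigma> 1) (\<sigma> u)" "adj (\<sigma> 1) (\<sigma> v)" using u v c0 by simp_all
  moreover have "1 \<in> {1..n}" using n by simp
  ultimately have "adj 1 u" "adj 1 v" using ad u v by blast+
  hence "u = 2" "v = 2" using u v by (auto simp: adj_def)
  hence "c0 - 1 = c0 + 1" using u v by simp
  thus False by simp
qed

lemma rho_bij: "bij_betw (\<lambda>i. n + 1 - i) {1..n} {1..(n::nat)}"
proof (rule bij_betw_byWitness[where f'="\<lambda>i. n + 1 - i"])
  show "\<forall>a\<in>{1..n}. n + 1 - (n + 1 - a) = a" by auto
  show "\<forall>a\<in>{1..n}. n + 1 - (n + 1 - a) = a" by auto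
  show "(\<lambda>i. n + 1 - i) ` {1..n} \<subseteq> {1..n}" by auto
  show "(\<lambda>i. n + 1 - i) ` {1..n} \<subseteq> {1..n}" by auto
qed

lemma aut_cases:
  assumes a: "is_aut {1..n} (fence_le lower n) \<sigma>"
  shows "(\<forall>i\<in>{1..n}. \<sigma> i = i) \<or> (\<forall>i\<in>{1..n}. \<sigma> i = n + 1 - i)"
proof (cases "n = 0")
  case True thus ?thesis by simp
next
  case False
  have b: "bij_betw \<sigma> {1..n} {1..n}" using a unfolding is_aut_def by blast
  have ad: "\<forall>a\<in>{1..n}. \<forall>b\<in>{1..n}. adj (\<sigma> a) (\<sigma> b) \<longleftrightarrow> adj a b" using aut_adj[OF a] by blast
  from path_end[OF b ad] False consider "\<sigma> 1 = 1" | "\<sigma> 1 = n" by force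
  thus ?thesis
  proof cases
    case 1 thus ?thesis using path_fix[OF b ad] by blast
  next
    case 2
    let ?t = "\<lambda>i. n + 1 - \<sigma> i"
    have bt: "bij_betw ?t {1..n} {1..n}"
      using bij_betw_trans[OF b rho_bij[of n]] by (simp add: o_def)
    have inr: "\<And>i. i \<in> {1..n} \<Longrightarrow> \<sigma> i \<in> {1..n}" using bij_betwE[OF b] by blast
    have adt: "\<forall>a\<in>{1..n}. \<forall>b\<in>{1..n}. adj (?t a) (?t b) \<longleftrightarrow> adj a b"
    proof (intro ballI)
      fix a b assume ab: "a \<in> {1..n}" "b \<in> {1..n}"
      have "adj (?t a) (?t b) \<longleftrightarrow> adj (\<sigma> a) (\<sigma> b)" using inr[OF ab(1)] inr[OF ab(2)]
        by (auto simp: adj_def)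
      thus "adj (?t a) (?t b) \<longleftrightarrow> adj a b" using ad ab by blast
    qed
    have "?t 1 = 1" using 2 False by simp
    from path_fix[OF bt adt this] have "\<forall>i\<in>{1..n}. ?t i = i" .
    hence "\<forall>i\<in>{1..n}. \<sigma> i = n + 1 - i" using inr by fastforce
    thus ?thesis by blast
  qed
qed

lemma even_aut_id:
  assumes a: "is_aut {1..n} (fence_le lower n) \<sigma>" and e: "even n"
  shows "\<forall>i\<in>{1..n}. \<sigma> i = i"
proof (rule ccontr)
  assume c: "\<not> ?thesis"
  hence r: "\<forall>i\<in>{1..n}. \<sigma> i = n + 1 - i" using aut_cases[OF a] by blast
  have "n \<ge> 2" using c e by (cases "n = 0") auto
  hence "fence_le lower n 1 2 \<longleftrightarrow> fence_le lower n (\<sigma> 1) (\<sigma> 2)" using a unfolding is_aut_def by auto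
  moreover have "\<sigma> 1 = n" "\<sigma> 2 = n - 1" using r \<open>n \<ge> 2\<close> by auto
  ultimately show False using \<open>n \<ge> 2\<close> e by (auto simp: fle)
qed



lemma sym1_moved:
  assumes "sym1 X le Q leQ r a b"
  shows "\<exists>\<sigma>. is_aut X le \<sigma> \<and> a \<in> X \<and> \<sigma> a \<noteq> a \<and> (\<exists>q. 1 \<le> q \<and> q < r \<and> b = (\<sigma>^^q) a)"
proof -
  obtain \<sigma> S i j q where g: "is_generator X le Q leQ r \<sigma> S" and i: "i < r" and a: "a \<in> S i"
    and q: "1 \<le> q" "q < r" "b = (\<sigma> ^^ q) a"
    using assms unfolding sym1_def by blast
  have au: "is_aut X le \<sigma>" and gf: "gen_family X le \<sigma> r S (card Q)" using g unfolding is_generator_def by blast+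
  have "max_ordered le (moved X \<sigma>) (S i)" using gf i unfolding gen_family_def by blast
  hence "S i \<subseteq> moved X \<sigma>" unfolding max_ordered_def by blast
  hence "a \<in> moved X \<sigma>" using a by blast
  hence "a \<in> X \<and> \<sigma> a \<noteq> a" unfolding moved_def by blast
  thus ?thesis using au q by blast
qed

lemma poset_iso_sym:
  assumes "poset_iso X le Y le'" shows "poset_iso Y le' X le"
proof -
  obtain h where b: "bij_betw h X Y" and o: "\<forall>a\<in>X. \<forall>b\<in>X. le a b \<longleftrightarrow> le' (h a) (h b)"
    using assms unfolding poset_iso_def by blast
  let ?g = "inv_into X h"
  have bg: "bij_betw ?g Y X" using bij_betw_inv_into[OF b] .
  have "\<forall>a\<in>Y. \<forall>b\<in>Y. le' a b \<longleftrightarrow> le (?g a) (?g b)"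
  proof (intro ballI)
    fix a b assume ab: "a \<in> Y" "b \<in> Y"
    have ga: "?g a \<in> X" "?g b \<in> X" using bij_betwE[OF bg] ab by blast+
    have "h (?g a) = a" "h (?g b) = b" using bij_betw_inv_into_right[OF b] ab by blast+
    thus "le' a b \<longleftrightarrow> le (?g a) (?g b)" using o ga by metis
  qed
  thus ?thesis unfolding poset_iso_def using bg by blast
qed

lemma poset_iso_trans:
  assumes "poset_iso X le Y le'" "poset_iso Y le' Z le''" shows "poset_iso X le Z le''"
proof -
  obtain h where b: "bij_betw h X Y" and o: "\<forall>a\<in>X. \<forall>b\<in>X. le a b \<longleftrightarrow> le' (h a) (h b)"
    using assms(1) unfolding poset_iso_def by blast
  obtain k where b2: "bij_betw k Y Z" and o2: "\<forall>a\<in>Y. \<forall>b\<in>Y. le' a b \<longleftrightarrow> le'' (k a) (k b)"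
    using assms(2) unfolding poset_iso_def by blast
  have "bij_betw (k \<circ> h) X Z" using bij_betw_trans[OF b b2] .
  moreover have "\<forall>a\<in>X. \<forall>b\<in>X. le a b \<longleftrightarrow> le'' ((k \<circ> h) a) ((k \<circ> h) b)"
  proof (intro ballI)
    fix a b assume ab: "a \<in> X" "b \<in> X"
    have "h a \<in> Y" "h b \<in> Y" using bij_betwE[OF b] ab by blast+
    thus "le a b \<longleftrightarrow> le'' ((k \<circ> h) a) ((k \<circ> h) b)" using o o2 ab by simp
  qed
  ultimately show ?thesis unfolding poset_iso_def by blast
qed

lemma even_not_ls:
  assumes e: "even n"
  shows "\<not> locally_symmetric {1..n} (fence_le lower n)"
proof -
  let ?X = "{1..n}" and ?le = "fence_le lower n"
  have ns: "\<not> sym1 ?X ?le Q leQ r a b" for Q :: "nat set" and leQ r a b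
  proof
    assume "sym1 ?X ?le Q leQ r a b"
    from sym1_moved[OF this] obtain \<sigma> where au: "is_aut ?X ?le \<sigma>" and a: "a \<in> ?X" "\<sigma> a \<noteq> a"
      by blast
    show False using even_aut_id[OF au e] a by blast
  qed
  have qs: "qsym ?X ?le Q leQ r a b \<longleftrightarrow> a = b" for Q :: "nat set" and leQ r a b
  proof
    assume "qsym ?X ?le Q leQ r a b"
    thus "a = b" unfolding qsym_def
      by (induction rule: rtranclp_induct) (use ns in auto)
  qed (simp add: qsym_def)
  have iso: "poset_iso (quot_carrier ?X ?le Q leQ r) (quot_le ?le) ?X ?le" for Q :: "nat set" and leQ r
  proof -
    have qc: "quot_carrier ?X ?le Q leQ r = (\<lambda>a. {a}) ` ?X"
      unfolding quot_carrier_def qs by auto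
    have bb: "bij_betw (\<lambda>a. {a}) ?X ((\<lambda>a. {a}) ` ?X)"
      by (rule bij_betw_imageI) (auto simp: inj_on_def)
    have "poset_iso ?X ?le ((\<lambda>a. {a}) ` ?X) (quot_le ?le)"
      unfolding poset_iso_def using bb by (auto simp: quot_le_def)
    thus ?thesis using qc poset_iso_sym by metis
  qed
  show ?thesis unfolding locally_symmetric_def using iso by blast
qed



lemma rho_aut:
  assumes "odd n"
  shows "is_aut {1..n} (fence_le lower n) (\<lambda>a. n + 1 - a)"
  unfolding is_aut_def
proof (intro conjI ballI)
  show "bij_betw (\<lambda>a. n + 1 - a) {1..n} {1..n}" by (rule rho_bij)
  fix a b assume ab: "a \<in> {1..n}" "b \<in> {1..n}"
  have pa: "odd (n + 1 - a) \<longleftrightarrow> odd a" using ab assms by (auto simp: odd_iff_mod_2_eq_one)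
  show "fence_le lower n a b \<longleftrightarrow> fence_le lower n (n + 1 - a) (n + 1 - b)"
    unfolding fle using ab pa by auto
qed

lemma ord_upper:
  assumes B: "B \<subseteq> {1..n}" "B \<noteq> {}"
  shows "ord_pairs (fence_le lower n) B \<le> card B - 1"
proof -
  let ?P = "{(a,b). a\<in>B \<and> b\<in>B \<and> fence_le lower n a b \<and> a \<noteq> b}"
  let ?g = "\<lambda>(a::nat,b). max a b"
  have fB: "finite B" using finite_subset[OF B(1)] by blast
  have inj: "inj_on ?g ?P"
  proof (rule inj_onI, clarify)
    fix a b a' b'
    assume h: "a \<in> B" "b \<in> B" "fence_le lower n a b" "a \<noteq> b" "a' \<in> B" "b' \<in> B" "fence_le lower n a' b'" "a' \<noteq> b'"
      "max a b = max a' b'"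
    from h(3,4) have 1: "(b = a+1 \<or> a = b+1) \<and> (odd a \<longleftrightarrow> lower)" unfolding fle by blast
    from h(7,8) have 2: "(b' = a'+1 \<or> a' = b'+1) \<and> (odd a' \<longleftrightarrow> lower)" unfolding fle by blast
    show "a = a' \<and> b = b'" using 1 2 h(9) by auto
  qed
  have im: "?g ` ?P \<subseteq> B - {Min B}"
  proof clarify
    fix a b assume h: "a \<in> B" "b \<in> B" "fence_le lower n a b" "a \<noteq> b"
    have "Min B \<le> a" "Min B \<le> b" using h fB by auto
    thus "max a b \<in> B - {Min B}" using h by (auto simp: max_def)
  qed
  have "card ?P \<le> card (B - {Min B})" using card_inj_on_le[OF inj im] fB by blast
  also have "\<dots> = card B - 1" using fB B(2) by (simp add: card_Diff_singleton)
  finally show ?thesis unfolding ord_pairs_def .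
qed

lemma ord_lower:
  assumes pq: "1 \<le> p" "q \<le> n"
  shows "q - p \<le> ord_pairs (fence_le lower n) {p..q}"
proof -
  let ?le = "fence_le lower n"
  let ?P = "{(a,b). a\<in>{p..q} \<and> b\<in>{p..q} \<and> ?le a b \<and> a \<noteq> b}"
  let ?g = "\<lambda>c. if ?le (c - 1) c then (c - 1, c) else (c, c - 1)"
  have fP: "finite ?P" by (rule finite_subset[of _ "{p..q} \<times> {p..q}"]) auto
  have inj: "inj_on ?g {Suc p..q}"
    by (rule inj_onI) (auto split: if_splits)
  have im: "?g ` {Suc p..q} \<subseteq> ?P"
  proof (rule image_subsetI)
    fix c assume c: "c \<in> {Suc p..q}"
    have "?le (c - 1) c \<or> ?le c (c - 1)" using c pq unfolding fle by auto
    thus "?g c \<in> ?P" using c by auto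
  qed
  have "card {Suc p..q} \<le> card ?P" using card_inj_on_le[OF inj im fP] .
  thus ?thesis unfolding ord_pairs_def by simp
qed

lemma chain_min:
  assumes C: "C \<subseteq> {1..n}" "is_chain (fence_le lower n) C" "c \<in> C"
  shows "c = Min C \<or> (c = Min C + 1 \<and> Min C \<in> C)"
proof -
  have fC: "finite C" using finite_subset[OF C(1)] by blast
  have m: "Min C \<in> C" "Min C \<le> c" using Min_in[OF fC] C(3) Min_le[OF fC C(3)] by blast+
  have "fence_le lower n c (Min C) \<or> fence_le lower n (Min C) c" using C(2) C(3) m(1) unfolding is_chain_def by blast
  thus ?thesis using m unfolding fle by auto
qed

lemma lc_bound:
  assumes Y: "Y \<subseteq> {1..n}" and x: "x \<in> {card C | C. C \<subseteq> Y \<and> is_chain (fence_le lower n) C}"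
  shows "x \<le> 2" "(\<forall>a\<in>Y. a + 1 \<notin> Y) \<Longrightarrow> x \<le> 1"
proof -
  obtain C where C: "x = card C" "C \<subseteq> Y" "is_chain (fence_le lower n) C" using x by blast
  have C1: "C \<subseteq> {1..n}" using C Y by blast
  have fC: "finite C" using finite_subset[OF C1] by blast
  have sub: "C \<subseteq> {Min C, Min C + 1}" using chain_min[OF C1 C(3)] by blast
  have "card C \<le> card {Min C, Min C + 1}" using card_mono[OF _ sub] by simp
  also have "\<dots> \<le> 2" by (simp add: card_insert_if)
  finally show "x \<le> 2" using C by simp
  assume na: "\<forall>a\<in>Y. a + 1 \<notin> Y"
  have "C \<subseteq> {Min C}"
  proof
    fix c assume c: "c \<in> C"
    from chain_min[OF C1 C(3) c] have "c = Min C \<or> (c = Min C + 1 \<and> Min C \<in> C)" .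
    moreover have "\<not> (c = Min C + 1 \<and> Min C \<in> C)" using na C(2) c by blast
    ultimately show "c \<in> {Min C}" by auto
  qed
  hence "card C \<le> card {Min C}" by (rule card_mono[rotated]) simp
  thus "x \<le> 1" using C by simp
qed

lemma lc2:
  assumes Y: "Y \<subseteq> {1..n}" "a \<in> Y" "a + 1 \<in> Y"
  shows "longest_chain (fence_le lower n) Y = 2"
  unfolding longest_chain_def
proof (rule Max_eqI)
  let ?S = "{card C | C. C \<subseteq> Y \<and> is_chain (fence_le lower n) C}"
  show "finite ?S"
  proof (rule finite_subset[of _ "{0..2}"])
    show "?S \<subseteq> {0..2}"
    proof
      fix y assume "y \<in> ?S"
      from lc_bound(1)[OF Y(1) this] show "y \<in> {0..2}" by simp
    qed
  qed simp
  show "y \<le> 2" if "y \<in> ?S" for y using lc_bound(1)[OF Y(1) that] .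
  have "is_chain (fence_le lower n) {a, a+1}"
    using Y unfolding is_chain_def fle by auto
  moreover have "{a, a+1} \<subseteq> Y" "card {a, a+1} = 2" using Y by auto
  ultimately show "2 \<in> ?S" unfolding mem_Collect_eq by (intro exI[of _ "{a, a+1}"]) simp
qed

lemma lc1:
  assumes Y: "Y \<subseteq> {1..n}" "a \<in> Y" "\<forall>a\<in>Y. a + 1 \<notin> Y"
  shows "longest_chain (fence_le lower n) Y = 1"
  unfolding longest_chain_def
proof (rule Max_eqI)
  let ?S = "{card C | C. C \<subseteq> Y \<and> is_chain (fence_le lower n) C}"
  show "finite ?S"
  proof (rule finite_subset[of _ "{0..2}"])
    show "?S \<subseteq> {0..2}"
    proof
      fix y assume "y \<in> ?S"
      from lc_bound(1)[OF Y(1) this] show "y \<in> {0..2}" by simp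
    qed
  qed simp
  show "y \<le> 1" if "y \<in> ?S" for y using lc_bound(2)[OF Y(1) that Y(3)] .
  have "is_chain (fence_le lower n) {a}"
    unfolding is_chain_def fle by auto
  moreover have "{a} \<subseteq> Y" "card {a} = 1" using Y by auto
  ultimately show "1 \<in> ?S" unfolding mem_Collect_eq by (intro exI[of _ "{a}"]) simp
qed

lemma is_poset_fence: "is_poset Q (fence_le lower n)"
  unfolding is_poset_def
proof (intro conjI ballI impI)
  fix x show "fence_le lower n x x" by (simp add: fle)
next
  fix x y assume "fence_le lower n x y \<and> fence_le lower n y x"
  thus "x = y" unfolding fle by auto
next
  fix x y z assume "fence_le lower n x y \<and> fence_le lower n y z"
  thus "fence_le lower n x z" unfolding fence_le_def by auto
qed

lemma flip_iso:
  assumes "even m"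
  shows "poset_iso {1..m} (fence_le lower m) {1..m} (fence_le lower' m)"
proof (cases "lower' = lower")
  case True thus ?thesis unfolding poset_iso_def by (intro exI[of _ id]) auto
next
  case False
  show ?thesis unfolding poset_iso_def
  proof (intro exI conjI ballI)
    show "bij_betw (\<lambda>a. m + 1 - a) {1..m} {1..m}" by (rule rho_bij)
    fix a b assume ab: "a \<in> {1..m}" "b \<in> {1..m}"
    have pa: "odd (m + 1 - a) \<longleftrightarrow> even a" using ab assms by (auto simp: odd_iff_mod_2_eq_one)
    show "fence_le lower m a b \<longleftrightarrow> fence_le lower' m (m + 1 - a) (m + 1 - b)"
      unfolding fle using ab pa False by auto
  qed
qed



lemma max_ord_lemma:
  assumes "A \<subseteq> M" "M \<subseteq> {1..n}" "card A = k" "1 \<le> k" "k - 1 \<le> ord_pairs (fence_le lower n) A"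
  shows "max_ordered (fence_le lower n) M A"
  unfolding max_ordered_def
proof (intro conjI allI impI)
  show "A \<subseteq> M" by fact
  fix B assume B: "B \<subseteq> M \<and> card B = card A"
  hence "B \<noteq> {}" using assms by auto
  hence "ord_pairs (fence_le lower n) B \<le> card B - 1" using ord_upper[of B n lower] B assms(2) by blast
  thus "ord_pairs (fence_le lower n) B \<le> ord_pairs (fence_le lower n) A" using B assms by simp
qed

lemma order_fold:
  assumes n: "n = 2*k+1" and cd: "c \<in> {1..k+1}" "d \<in> {1..k+1}"
  shows "fence_le lower (k+1) c d \<longleftrightarrow>
    (fence_le lower n c d \<or> fence_le lower n c (n+1-d) \<or> fence_le lower n (n+1-c) d \<or> fence_le lower n (n+1-c) (n+1-d))"
proof -
  have a: "fence_le lower n (n+1-c) (n+1-d) \<longleftrightarrow> fence_le lower n c d"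
    using rho_aut[of n lower] n cd unfolding is_aut_def by auto
  have b: "fence_le lower n c (n+1-d) \<Longrightarrow> fence_le lower n c d"
  proof -
    assume h: "fence_le lower n c (n+1-d)"
    show ?thesis
    proof (cases "d = k+1")
      case True thus ?thesis using h n by simp
    next
      case False
      hence "d \<le> k" using cd by simp
      hence "n + 1 - d \<ge> k + 2" using n by simp
      hence "c = k+1 \<and> n + 1 - d = k + 2 \<and> (odd c \<longleftrightarrow> lower)" using h cd unfolding fle by auto
      thus ?thesis using n cd unfolding fle by auto
    qed
  qed
  have c: "fence_le lower n (n+1-c) d \<Longrightarrow> fence_le lower n c d"
  proof -
    assume h: "fence_le lower n (n+1-c) d"
    show ?thesis
    proof (cases "c = k+1")
      case True thus ?thesis using h n by simp
    next
      case False
      hence "c \<le> k" using cd by simp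
      hence "n + 1 - c \<ge> k + 2" using n by simp
      have e: "d = k+1" "c = k" using h cd n \<open>c \<le> k\<close> unfolding fle by auto
      hence "fence_le lower n (k+2) (k+1)" using h n by simp
      hence "odd (k+2) \<longleftrightarrow> lower" unfolding fle by auto
      thus ?thesis using e n cd unfolding fle by auto
    qed
  qed
  have d: "fence_le lower (k+1) c d \<longleftrightarrow> fence_le lower n c d"
    using n cd unfolding fle by auto
  show ?thesis using a b c d by blast
qed



lemma odd_step:
  assumes k: "1 \<le> k" and n: "n = 2*k+1"
  shows "poset_iso (quot_carrier {1..n} (fence_le lower n) {1..k} (fence_le lower n) 2)
           (quot_le (fence_le lower n)) {1..k+1} (fence_le lower (k+1))"
proof -
  define le where "le = fence_le lower n"
  define \<rho> where "\<rho> = (\<lambda>a::nat. n + 1 - a)"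
  define S where "S = (\<lambda>i::nat. if i = 0 then {1..k} else {k+2..n})"
  define M where "M = {1..n} - {k+1}"
  have on: "odd n" using n by simp
  have mv: "moved {1..n} \<rho> = M" unfolding moved_def M_def \<rho>_def using n by auto
  have aut: "is_aut {1..n} le \<rho>" unfolding le_def \<rho>_def using rho_aut[OF on] .
  have img0: "\<rho> ` {1..k} = {k+2..n}"
  proof
    show "\<rho> ` {1..k} \<subseteq> {k+2..n}" unfolding \<rho>_def using n by auto
    show "{k+2..n} \<subseteq> \<rho> ` {1..k}"
    proof
      fix x assume x: "x \<in> {k+2..n}"
      show "x \<in> \<rho> ` {1..k}" by (rule image_eqI[of x _ "n + 1 - x"]) (use x n in \<open>auto simp: \<rho>_def\<close>)
    qed
  qed
  have img1: "\<rho> ` {k+2..n} = {1..k}"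
  proof
    show "\<rho> ` {k+2..n} \<subseteq> {1..k}" unfolding \<rho>_def using n by auto
    show "{1..k} \<subseteq> \<rho> ` {k+2..n}"
    proof
      fix x assume x: "x \<in> {1..k}"
      show "x \<in> \<rho> ` {k+2..n}" by (rule image_eqI[of x _ "n + 1 - x"]) (use x n in \<open>auto simp: \<rho>_def\<close>)
    qed
  qed
  have two: "{..<2::nat} = {0,1}" by auto
  have cardS: "card (S i) = k" for i unfolding S_def using n by auto
  have SM: "S i \<subseteq> M" for i unfolding S_def M_def using n by auto
  have Mn: "M \<subseteq> {1..n}" unfolding M_def by auto
  have op: "k - 1 \<le> ord_pairs le (S i)" for i
  proof (cases "i = 0")
    case True thus ?thesis using ord_lower[of 1 k n lower] n unfolding S_def le_def by simp
  next
    case False thus ?thesis using ord_lower[of "k+2" n n lower] n unfolding S_def le_def by simp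
  qed
  have mo: "max_ordered le M (S i)" for i
    unfolding le_def by (rule max_ord_lemma[OF SM Mn cardS k op[unfolded le_def]])
  have lc: "longest_chain le (S i) = longest_chain le M" for i
  proof (cases "k = 1")
    case True
    have "M = {1, 3}" unfolding M_def using True n by auto
    moreover have "S i = {1} \<or> S i = {3}" unfolding S_def using True n by auto
    ultimately have MS: "M = {1, 3}" "S i = {1} \<or> S i = {3}" by blast+
    have l1: "longest_chain le {1,3} = 1" unfolding le_def by (rule lc1[of _ n 1]) (use n True in auto)
    have l2: "longest_chain le {1} = 1" unfolding le_def by (rule lc1[of _ n 1]) (use n True in auto)
    have l3: "longest_chain le {3} = 1" unfolding le_def by (rule lc1[of _ n 3]) (use n True in auto)
    show ?thesis using MS l1 l2 l3 by metis
  next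
    case False
    have a: "longest_chain le M = 2" unfolding le_def by (rule lc2[of M n 1]) (use False k n in \<open>auto simp: M_def\<close>)
    have b: "longest_chain le (S i) = 2"
    proof (cases "i = 0")
      case True thus ?thesis unfolding le_def S_def by (intro lc2[of _ n 1]) (use False k n in auto)
    next
      case F2: False thus ?thesis unfolding le_def S_def by (intro lc2[of _ n "k+2"]) (use False k n in auto)
    qed
    show ?thesis using a b by simp
  qed
  have imS: "\<rho> ` S i = S ((i + 1) mod 2)" if "i < 2" for i
  proof -
    have "i = 0 \<or> i = 1" using that by auto
    thus ?thesis using img0 img1 unfolding S_def by auto
  qed
  have un: "(\<Union>i<2. S i) = M" unfolding two S_def M_def using n by auto
  have gf: "gen_family {1..n} le \<rho> 2 S k"
    unfolding gen_family_def mv using mo cardS imS lc un by blast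
  have cQ: "card {1..k} = k" by simp
  have isoS: "poset_iso (S i) le {1..k} le" for i
  proof (cases "i = 0")
    case True thus ?thesis unfolding S_def poset_iso_def by (intro exI[of _ id]) auto
  next
    case False
    have b: "bij_betw \<rho> {k+2..n} {1..k}"
    proof (rule bij_betw_imageI)
      show "inj_on \<rho> {k+2..n}" unfolding \<rho>_def inj_on_def using n by auto
    qed (rule img1)
    have o: "\<forall>a\<in>{k+2..n}. \<forall>b\<in>{k+2..n}. le a b \<longleftrightarrow> le (\<rho> a) (\<rho> b)"
      using aut n unfolding is_aut_def by auto
    show ?thesis using False b o unfolding S_def poset_iso_def by auto
  qed
  have minimal: "k \<le> k'" if "gen_family {1..n} le \<rho> 2 T k'" for T k'
  proof -
    have u: "T 0 \<union> T 1 = M" and c: "card (T 0) = k'" "card (T 1) = k'"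
      using that unfolding gen_family_def mv two by auto
    have "card M = 2 * k" unfolding M_def using n by simp
    moreover have "card M \<le> card (T 0) + card (T 1)" using u card_Un_le by metis
    ultimately show ?thesis using c by simp
  qed
  have gen: "is_generator {1..n} le {1..k} le 2 \<rho> S"
    unfolding is_generator_def using aut gf isoS minimal cQ by auto
  have fwd: "a \<in> {1..n} \<and> b = \<rho> a" if "sym1 {1..n} le {1..k} le 2 a b" for a b
  proof -
    from sym1_moved[OF that] obtain \<sigma> q where au: "is_aut {1..n} le \<sigma>" and a: "a \<in> {1..n}" "\<sigma> a \<noteq> a"
      and q: "1 \<le> q" "q < 2" "b = (\<sigma> ^^ q) a" by blast
    have "q = 1" using q by simp
    have b: "b = \<sigma> a" using q(3) unfolding \<open>q = 1\<close> by simp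
    from aut_cases[OF au[unfolded le_def]] have "\<sigma> a = \<rho> a" using a unfolding \<rho>_def by blast
    thus ?thesis using a b by simp
  qed
  have bwd: "sym1 {1..n} le {1..k} le 2 a (\<rho> a)" if a: "a \<in> {1..n}" "a \<noteq> k+1" for a
  proof (cases "a \<le> k")
    case True
    have "a \<in> S 0" "\<rho> a \<in> S 1" "S 0 \<noteq> S 1" unfolding S_def \<rho>_def using True a n by auto
    thus ?thesis unfolding sym1_def using gen by (intro exI[of _ \<rho>] exI[of _ S] exI[of _ 0] exI[of _ 1]) auto
  next
    case False
    have "a \<in> S 1" "\<rho> a \<in> S 0" "S 1 \<noteq> S 0" unfolding S_def \<rho>_def using False a n by auto
    thus ?thesis unfolding sym1_def using gen by (intro exI[of _ \<rho>] exI[of _ S] exI[of _ 1] exI[of _ 0] exI[of _ 1]) auto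
  qed
  have rr: "\<rho> (\<rho> a) = a" if "a \<in> {1..n}" for a using that unfolding \<rho>_def by auto
  have rX: "\<rho> a \<in> {1..n}" if "a \<in> {1..n}" for a using that unfolding \<rho>_def by auto
  have qs: "qsym {1..n} le {1..k} le 2 a b \<longleftrightarrow> b = a \<or> (a \<in> {1..n} \<and> b = \<rho> a)" for a b
  proof
    assume "qsym {1..n} le {1..k} le 2 a b"
    thus "b = a \<or> (a \<in> {1..n} \<and> b = \<rho> a)" unfolding qsym_def
    proof (induction rule: rtranclp_induct)
      case base thus ?case by simp
    next
      case (step y z)
      from fwd[OF step(2)] have z: "y \<in> {1..n}" "z = \<rho> y" by auto
      from step(3) show ?case
      proof
        assume "y = a" thus ?case using z by simp
      next
        assume "a \<in> {1..n} \<and> y = \<rho> a" thus ?case using z rr by simp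
      qed
    qed
  next
    assume h: "b = a \<or> (a \<in> {1..n} \<and> b = \<rho> a)"
    show "qsym {1..n} le {1..k} le 2 a b"
    proof (cases "b = a \<or> a = k+1")
      case True
      hence "b = a" using h n unfolding \<rho>_def by auto
      thus ?thesis unfolding qsym_def by simp
    next
      case False
      hence "sym1 {1..n} le {1..k} le 2 a b" using h bwd by auto
      thus ?thesis unfolding qsym_def by (rule r_into_rtranclp)
    qed
  qed
  have qc: "quot_carrier {1..n} le {1..k} le 2 = (\<lambda>c. {c, \<rho> c}) ` {1..k+1}"
  proof -
    have "quot_carrier {1..n} le {1..k} le 2 = (\<lambda>a. {a, \<rho> a}) ` {1..n}"
      unfolding quot_carrier_def qs using rX by (intro image_cong) auto
    also have "\<dots> = (\<lambda>c. {c, \<rho> c}) ` {1..k+1}"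
    proof
      show "(\<lambda>c. {c, \<rho> c}) ` {1..k+1} \<subseteq> (\<lambda>a. {a, \<rho> a}) ` {1..n}" using n by auto
      show "(\<lambda>a. {a, \<rho> a}) ` {1..n} \<subseteq> (\<lambda>c. {c, \<rho> c}) ` {1..k+1}"
      proof (rule image_subsetI)
        fix a assume a: "a \<in> {1..n}"
        show "{a, \<rho> a} \<in> (\<lambda>c. {c, \<rho> c}) ` {1..k+1}"
        proof (cases "a \<le> k+1")
          case True thus ?thesis using a by auto
        next
          case False
          have "{a, \<rho> a} = {\<rho> a, \<rho> (\<rho> a)}" using rr[OF a] by auto
          moreover have "\<rho> a \<in> {1..k+1}" using False a n unfolding \<rho>_def by auto
          ultimately show ?thesis by blast
        qed
      qed
    qed
    finally show ?thesis .
  qed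
  have bij: "bij_betw (\<lambda>c. {c, \<rho> c}) {1..k+1} (quot_carrier {1..n} le {1..k} le 2)"
    unfolding qc
  proof (rule bij_betw_imageI)
    show "inj_on (\<lambda>c. {c, \<rho> c}) {1..k+1}"
    proof (rule inj_onI)
      fix c d assume cd: "c \<in> {1..k+1}" "d \<in> {1..k+1}" "{c, \<rho> c} = {d, \<rho> d}"
      hence "c = d \<or> c = \<rho> d" by blast
      thus "c = d" using cd n unfolding \<rho>_def by auto
    qed
  qed simp
  have ord: "fence_le lower (k+1) c d \<longleftrightarrow> quot_le le {c, \<rho> c} {d, \<rho> d}" if "c \<in> {1..k+1}" "d \<in> {1..k+1}" for c d
    unfolding quot_le_def le_def \<rho>_def using order_fold[OF n that, of lower] by auto
  have "poset_iso {1..k+1} (fence_le lower (k+1)) (quot_carrier {1..n} le {1..k} le 2) (quot_le le)"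
    unfolding poset_iso_def using bij ord by blast
  from poset_iso_sym[OF this] show ?thesis unfolding le_def .
qed



lemma retract_odd:
  assumes k: "1 \<le> k" and n: "n = 2*k+1" and l: "lower' = lower \<or> even (k+1)"
  shows "retract_step (fence lower n) (fence lower' (k+1))"
proof -
  have i1: "poset_iso (quot_carrier {1..n} (fence_le lower n) {1..k} (fence_le lower n) 2)
           (quot_le (fence_le lower n)) {1..k+1} (fence_le lower (k+1))" by (rule odd_step[OF k n])
  have i2: "poset_iso {1..k+1} (fence_le lower (k+1)) {1..k+1} (fence_le lower' (k+1))"
  proof (cases "lower' = lower")
    case True thus ?thesis unfolding poset_iso_def by (intro exI[of _ id]) auto
  next
    case False thus ?thesis using l flip_iso by blast
  qed
  have "poset_iso (quot_carrier {1..n} (fence_le lower n) {1..k} (fence_le lower n) 2)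
           (quot_le (fence_le lower n)) {1..k+1} (fence_le lower' (k+1))"
    by (rule poset_iso_trans[OF i1 i2])
  moreover have "is_poset {1..k} (fence_le lower n)" by (rule is_poset_fence)
  ultimately show ?thesis unfolding retract_step_def fence_def
    by (intro exI[of _ "{1..k}"] exI[of _ "fence_le lower n"] exI[of _ 2]) simp
qed

lemma ex_even: "2 \<le> n \<Longrightarrow> \<exists>j. even ((fstep^^j) n)"
proof (induction n rule: less_induct)
  case (less n)
  show ?case
  proof (cases "even n")
    case True thus ?thesis by (intro exI[of _ 0]) simp
  next
    case False
    have f: "fstep n = (n+1) div 2" using False unfolding fstep_def by simp
    have "2 \<le> fstep n" "fstep n < n" using f less.prems False by presburger+
    then obtain j where "even ((fstep^^j) (fstep n))" using less.IH by blast
    hence "even ((fstep^^Suc j) n)" by (simp add: funpow_Suc_right del: funpow.simps)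
    thus ?thesis by blast
  qed
qed

lemma fdown_even: "even n \<Longrightarrow> fdown n = n"
  unfolding fdown_def by (subst Least_eq_0) simp_all

lemma fdown_odd:
  assumes "odd n" "3 \<le> n" shows "fdown n = fdown ((n+1) div 2)"
proof -
  have f: "fstep n = (n+1) div 2" using assms unfolding fstep_def by simp
  have "2 \<le> fstep n" using f assms by presburger
  then obtain j where j: "even ((fstep^^j) (fstep n))" using ex_even by blast
  have e: "(fstep^^Suc i) n = (fstep^^i) (fstep n)" for i by (simp add: funpow_Suc_right del: funpow.simps)
  have "(LEAST i. even ((fstep^^i) n)) = Suc (LEAST i. even ((fstep^^Suc i) n))"
    by (rule Least_Suc[of _ "Suc j"]) (use j e assms in simp_all)
  hence L: "(LEAST i. even ((fstep^^i) n)) = Suc (LEAST i. even ((fstep^^i) (fstep n)))" unfolding e .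
  have "fdown n = (fstep^^Suc (LEAST i. even ((fstep^^i) (fstep n)))) n" unfolding fdown_def L ..
  also have "\<dots> = (fstep^^(LEAST i. even ((fstep^^i) (fstep n)))) (fstep n)" by (rule e)
  also have "\<dots> = fdown (fstep n)" unfolding fdown_def ..
  finally show ?thesis using f by simp
qed

lemma main_odd:
  "odd n \<and> 3 \<le> n \<longrightarrow> retract_step\<^sup>+\<^sup>+ (fence lower n) (fence True (fdown n)) \<and> fdown n < n"
proof (induction n arbitrary: lower rule: less_induct)
  case (less n)
  show ?case
  proof
    assume h: "odd n \<and> 3 \<le> n"
    obtain k where n: "n = 2*k+1" using h oddE by blast
    have k: "1 \<le> k" using h n by simp
    have fd: "fdown n = fdown (k+1)" using fdown_odd[of n] h n by simp
    show "retract_step\<^sup>+\<^sup>+ (fence lower n) (fence True (fdown n)) \<and> fdown n < n"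
    proof (cases "even (k+1)")
      case True
      have "retract_step (fence lower n) (fence True (k+1))" by (rule retract_odd[OF k n]) (use True in simp)
      moreover have "fdown n = k+1" using fd fdown_even[OF True] by simp
      ultimately show ?thesis using n k by auto
    next
      case False
      have m3: "odd (k+1) \<and> 3 \<le> k+1" using False k by presburger
      have "k + 1 < n" using n k by simp
      from less.IH[OF this, of lower] m3
      have ih: "retract_step\<^sup>+\<^sup>+ (fence lower (k+1)) (fence True (fdown (k+1)))" "fdown (k+1) < k+1" by auto
      have "retract_step (fence lower n) (fence lower (k+1))" by (rule retract_odd[OF k n]) simp
      from tranclp_into_tranclp2[OF this ih(1)] show ?thesis using fd ih(2) n by simp
    qed
  qed
qed

theorem mainTheorem8:
  shows "(\<forall>n lower. even n \<longrightarrow> \<not> locally_symmetric (fst (fence lower n)) (snd (fence lower n)))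
       \<and> (\<forall>n lower. odd n \<and> 3 \<le> n \<longrightarrow> retractable (fence lower n) (fence True (fdown n)))"
proof (intro conjI allI impI)
  fix n :: nat and lower assume "even n"
  thus "\<not> locally_symmetric (fst (fence lower n)) (snd (fence lower n))"
    unfolding fence_def using even_not_ls by simp
next
  fix n :: nat and lower assume h: "odd n \<and> 3 \<le> n"
  from main_odd[of n lower] h have r: "retract_step\<^sup>+\<^sup>+ (fence lower n) (fence True (fdown n))" "fdown n < n" by auto
  have "\<not> poset_iso {1..n} (fence_le lower n) {1..fdown n} (fence_le True (fdown n))"
  proof
    assume "poset_iso {1..n} (fence_le lower n) {1..fdown n} (fence_le True (fdown n))"
    then obtain h where "bij_betw h {1..n} {1..fdown n}" unfolding poset_iso_def by blast
    hence "card {1..n} = card {1..fdown n}" by (rule bij_betw_same_card)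
    thus False using r(2) by simp
  qed
  thus "retractable (fence lower n) (fence True (fdown n))"
    unfolding retractable_def using r(1) by (simp add: fence_def)
qed

end
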